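(* Let $n=ks\ge 2$ with $k,s$ positive integers and $k<n$, and let $\mathcal{C}$ be an optimum distance full flag code on $\mathbb{F}_q^n$ whose $k$-projected code $\mathcal{C}_k$ is a $k$-spread of $\mathbb{F}_q^n$. If $n\neq 3$, then $s=2$.
   Context: $q$ is a prime power. For subspaces $\mathcal{U},\mathcal{V}$ of $\mathbb{F}_q^n$, $d_S(\mathcal{U},\mathcal{V})=\dim(\mathcal{U}+\mathcal{V})-\dim(\mathcal{U}\cap\mathcal{V})$. A full flag on $\mathbb{F}_q^n$ is a tuple $(\mathcal{F}_1,\ldots,\mathcal{F}_{n-1})$ of subspaces with $\mathcal{F}_1\subsetneq\cdots\subsetneq\mathcal{F}_{n-1}$ and $\dim\mathcal{F}_i=i$. A full flag code is a set $\mathcal{C}$ of at least two full flags; its distance $d_f(\mathcal{C})$ is the minimum over distinct $\mathcal{F},\mathcal{F}'\in\mathcal{C}$ of $\sum_i d_S(\mathcal{F}_i,\mathcal{F}'_i)$; it is an optimum distance full flag code if $d_f(\mathcal{C})=2\left(\sum_{i\le\lfloor n/2\rfloor} i+\sum_{i>\lfloor n/2\rfloor}^{n-1}(n-i)\right)$. The $i$-projected code is $\mathcal{C}_i=\{\mathcal{F}_i:\mathcal{F}\in\mathcal{C}\}$. A $k$-spread of $\mathbb{F}_q^n$ ($k\mid n$) is a set of $k$-dimensional subspaces pairwise intersecting trivially, of cardinality $(q^n-1)/(q^k-1)$ (equivalently, partitioning the nonzero vectors of $\mathbb{F}_q^n$). *)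

theory Defs
  imports "HOL-Analysis.Analysis"
begin

text \<open>Ambient space: F_q^n is 'a^'n with 'a a finite field (q = CARD('a)) and n = CARD('n).
  A full flag is a list of length n-1 whose entry at position i-1 is the i-dimensional space F_i.\<close>

definition subspace_distance :: "('a::field ^ 'n) set \<Rightarrow> ('a ^ 'n) set \<Rightarrow> nat" where
  "subspace_distance U V = vec.dim (vec.span (U \<union> V)) - vec.dim (U \<inter> V)"

definition full_flag :: "('a::field ^ 'n) set list \<Rightarrow> bool" where
  "full_flag F \<longleftrightarrow> length F = CARD('n) - 1 \<and>
     (\<forall>i < CARD('n) - 1. vec.subspace (F ! i) \<and> vec.dim (F ! i) = i + 1) \<and>
     (\<forall>i. i + 1 < CARD('n) - 1 \<longrightarrow> F ! i \<subset> F ! (i + 1))"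

definition flag_distance :: "('a::field ^ 'n) set list \<Rightarrow> ('a ^ 'n) set list \<Rightarrow> nat" where
  "flag_distance F F' = (\<Sum>i < CARD('n) - 1. subspace_distance (F ! i) (F' ! i))"

definition full_flag_code :: "('a::field ^ 'n) set list set \<Rightarrow> bool" where
  "full_flag_code C \<longleftrightarrow> (\<forall>F\<in>C. full_flag F) \<and> finite C \<and> card C \<ge> 2"

definition flag_code_distance :: "('a::field ^ 'n) set list set \<Rightarrow> nat" where
  "flag_code_distance C = Min {flag_distance F F' | F F'. F \<in> C \<and> F' \<in> C \<and> F \<noteq> F'}"

definition optimum_distance_full_flag_code :: "('a::field ^ 'n) set list set \<Rightarrow> bool" where
  "optimum_distance_full_flag_code C \<longleftrightarrow> full_flag_code C \<and>
     flag_code_distance C = 2 * ((\<Sum>i = 1 .. CARD('n) div 2. i)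
                               + (\<Sum>i = CARD('n) div 2 + 1 .. CARD('n) - 1. CARD('n) - i))"

definition projected_code :: "('a::field ^ 'n) set list set \<Rightarrow> nat \<Rightarrow> ('a ^ 'n) set set" where
  "projected_code C i = (\<lambda>F. F ! (i - 1)) ` C"

definition is_spread :: "nat \<Rightarrow> ('a::{finite,field} ^ 'n) set set \<Rightarrow> bool" where
  "is_spread k S \<longleftrightarrow> k dvd CARD('n) \<and>
     (\<forall>U\<in>S. vec.subspace U \<and> vec.dim U = k) \<and>
     (\<forall>U\<in>S. \<forall>V\<in>S. U \<noteq> V \<longrightarrow> U \<inter> V = {0}) \<and>
     card S = (CARD('a) ^ CARD('n) - 1) div (CARD('a) ^ k - 1)"

end

theory Submission
  imports Defs
begin

lemma vec_dimension: "vec.dimension TYPE('a::field) TYPE('n::finite) = CARD('n)"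
  by (simp add: vec.dimension_def card_cart_basis)

lemma sd_facts:
  fixes U V :: "('a::field ^ 'n) set"
  assumes "vec.subspace U" "vec.subspace V" "vec.dim U = i" "vec.dim V = i"
  shows "subspace_distance U V \<le> 2 * min i (CARD('n) - i)"
    and "subspace_distance U V = 2 * i \<Longrightarrow> U \<inter> V = {0}"
proof -
  have sp: "vec.span (U \<union> V) = {x + y |x y. x \<in> U \<and> y \<in> V}"
  proof -
    have hU: "vec.span U = U" and hV: "vec.span V = V" using assms by (simp_all add: vec.span_eq_iff)
    show ?thesis unfolding vec.span_Un hU hV ..
  qed
  have e: "vec.dim (vec.span (U \<union> V)) + vec.dim (U \<inter> V) = 2 * i"
    unfolding sp using vec.dim_sums_Int[OF assms(1,2)] assms by simp
  have le: "vec.dim (vec.span (U \<union> V)) \<le> CARD('n)"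
    using vec.dim_subset_UNIV[of "vec.span (U \<union> V)"] by (simp add: vec_dimension)
  show "subspace_distance U V \<le> 2 * min i (CARD('n) - i)"
    unfolding subspace_distance_def using e le by linarith
  assume "subspace_distance U V = 2 * i"
  then have "vec.dim (U \<inter> V) = 0" unfolding subspace_distance_def using e by linarith
  then have "U \<inter> V \<subseteq> {0}" by simp
  moreover have "0 \<in> U \<inter> V" using assms vec.subspace_0 by blast
  ultimately show "U \<inter> V = {0}" by blast
qed

lemma card_subspace_ge:
  fixes U :: "('a::{finite,field} ^ 'n) set"
  assumes "vec.subspace U"
  shows "CARD('a) ^ vec.dim U \<le> card U"
proof -
  obtain B where B: "B \<subseteq> U" "vec.independent B" "card B = vec.dim U"
    using vec.basis_exists by metis
  have fB: "finite B" using B(2) vec.finiteI_independent by blast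
  define phi where "phi = (\<lambda>c. \<Sum>b\<in>B. c b *s b)"
  have inj: "inj_on phi (PiE B (\<lambda>_. UNIV))"
  proof (rule inj_onI)
    fix c d assume c: "c \<in> PiE B (\<lambda>_. UNIV)" and d: "d \<in> PiE B (\<lambda>_. UNIV)" and eq: "phi c = phi d"
    have "(\<Sum>b\<in>B. (c b - d b) *s b) = 0"
      using eq unfolding phi_def by (simp add: vec.scale_left_diff_distrib sum_subtractf)
    moreover have "\<forall>c. (\<Sum>v\<in>B. c v *s v) = 0 \<longrightarrow> (\<forall>v\<in>B. c v = 0)"
      using vec.independent_explicit[THEN iffD1, OF B(2)] by blast
    ultimately have "\<forall>b\<in>B. c b - d b = 0" by (rule_tac mp[OF spec[of _ "\<lambda>b. c b - d b"]])
    then show "c = d" using c d by (auto simp: PiE_def extensional_def fun_eq_iff)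
  qed
  have sub: "phi ` PiE B (\<lambda>_. UNIV) \<subseteq> U"
    unfolding phi_def using B(1) assms
    by (auto intro!: vec.subspace_sum vec.subspace_scale)
  have "card (PiE B (\<lambda>_. UNIV :: 'a set)) = CARD('a) ^ card B"
    using fB by (simp add: card_PiE)
  moreover have "card (phi ` PiE B (\<lambda>_. UNIV)) \<le> card U"
    using sub by (rule card_mono[OF finite])
  ultimately show ?thesis using card_image[OF inj] B(3) by simp
qed

lemma sum_identity:
  fixes n :: nat
  shows "2 * ((\<Sum>i = 1 .. n div 2. i) + (\<Sum>i = n div 2 + 1 .. n - 1. n - i))
         = (\<Sum>i < n - 1. 2 * min (Suc i) (n - Suc i))"
proof -
  have "(\<Sum>i < n - 1. 2 * min (Suc i) (n - Suc i)) = (\<Sum>i \<in> {Suc 0 .. n - 1}. 2 * min i (n - i))"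
    by (rule sum.atLeast1_atMost_eq[symmetric])
  also have "{Suc 0 .. n - 1} = {1 .. n div 2} \<union> {n div 2 + 1 .. n - 1}" by auto
  also have "(\<Sum>i \<in> {1 .. n div 2} \<union> {n div 2 + 1 .. n - 1}. 2 * min i (n - i))
     = (\<Sum>i \<in> {1 .. n div 2}. 2 * min i (n - i)) + (\<Sum>i \<in> {n div 2 + 1 .. n - 1}. 2 * min i (n - i))"
    by (rule sum.union_disjoint) auto
  also have "(\<Sum>i \<in> {1 .. n div 2}. 2 * min i (n - i)) = (\<Sum>i \<in> {1 .. n div 2}. 2 * i)"
    by (rule sum.cong) auto
  also have "(\<Sum>i \<in> {n div 2 + 1 .. n - 1}. 2 * min i (n - i)) = (\<Sum>i \<in> {n div 2 + 1 .. n - 1}. 2 * (n - i))"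
    by (rule sum.cong) auto
  finally show ?thesis by (simp add: sum_distrib_left)
qed

lemma arith_contra:
  fixes q k n m :: nat
  assumes "q \<ge> 2" "k \<ge> 1" "k + 1 \<le> n" "m \<ge> (q ^ n - 1) div (q ^ k - 1)"
    and "m * (q ^ (k + 1) - 1) \<le> q ^ n - 1"
  shows False
proof -
  define a where "a = q ^ k"
  define b where "b = q ^ n"
  have "q ^ 1 \<le> q ^ k" using assms(1,2) power_increasing[of 1 k q] by linarith
  then have a2: "a \<ge> 2" unfolding a_def using assms(1) by simp
  have qa: "q ^ (k + 1) = q * a" unfolding a_def by simp
  have "q ^ n \<ge> q ^ (k + 1)" using assms(1,3) power_increasing[of "k+1" n q] by linarith
  then have "b \<ge> q * a" unfolding b_def using qa by metis
  moreover have "q * a \<ge> 2 * a" using assms(1) by simp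
  ultimately have b2: "b \<ge> 2 * a" by linarith
  define d where "d = (b - 1) div (a - 1)"
  define r where "r = (b - 1) mod (a - 1)"
  have dr: "b - 1 = d * (a - 1) + r" unfolding d_def r_def by (rule div_mult_mod_eq[symmetric])
  have rl: "r < a - 1" unfolding r_def using a2 by (intro mod_less_divisor) linarith
  have "int (b - 1) = int (d * (a - 1) + r)" using dr by simp
  moreover have "int (b - 1) = int b - 1" "int (a - 1) = int a - 1" using a2 b2 by auto
  ultimately have i1: "int b - 1 = int d * (int a - 1) + int r" by simp
  have i2: "int r < int a - 1" using rl a2 by linarith
  have "m * (q * a - 1) \<le> b - 1" using assms(5) qa unfolding b_def by metis
  then have "int (m * (q * a - 1)) \<le> int (b - 1)" by linarith
  moreover have "q * a \<ge> 1" using a2 assms(1) by simp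
  ultimately have i3: "int m * (int q * int a - 1) \<le> int b - 1"
    using a2 b2 by (simp add: of_nat_diff)
  have i4: "int m \<ge> int d" using assms(4) unfolding d_def a_def b_def by simp
  have i5: "int q \<ge> 2" "int a \<ge> 2" "int b \<ge> 2 * int a" using assms(1) a2 b2 by auto
  have i6: "int q * int a \<ge> 2 * int a" using i5 by (intro mult_right_mono) auto
  have "int m * (int q * int a - 1) \<ge> int m * (2 * int a - 2)"
    by (rule mult_left_mono) (use i6 in linarith, simp)
  moreover have "int m * (2 * int a - 2) \<ge> int d * (2 * int a - 2)"
    using i4 i5 by (intro mult_right_mono) auto
  ultimately have "2 * (int d * (int a - 1)) \<le> int b - 1" using i3 by (simp add: algebra_simps)
  then show False using i1 i2 i5 by linarith
qed

lemma aux1: "(k::nat) \<ge> 2 \<Longrightarrow> 3*k \<le> n \<Longrightarrow> 2*(k+1) \<le> n" by presburger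
lemma aux2: "2*((k::nat)+1) \<le> n \<Longrightarrow> 0<k \<Longrightarrow> k < n - 1" by presburger
lemma aux3: "(k::nat) < n - 1 \<Longrightarrow> k + 1 \<le> n" by presburger

theorem proposition4p1:
  fixes C :: "('a::{finite,field} ^ 'n) set list set"
    and k s :: nat
  assumes "CARD('n) = k * s" and "CARD('n) \<ge> 2"
    and "k > 0" and "s > 0" and "k < CARD('n)"
    and "optimum_distance_full_flag_code C"
    and "is_spread k (projected_code C k)"
    and "CARD('n) \<noteq> 3"
  shows "s = 2"
proof (rule ccontr)
  assume s2: "s \<noteq> 2"
  let ?n = "CARD('n)" and ?q = "CARD('a)"
  have "s \<noteq> 1" using assms(1,5) by auto
  then have s3: "s \<ge> 3" using s2 assms(4) by linarith
  have h: "2 * (k + 1) \<le> ?n"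
  proof (cases "k = 1")
    case True then show ?thesis using assms(1,8) s3 by auto
  next
    case False
    then have "k \<ge> 2" using assms(3) by linarith
    moreover have "3 * k \<le> ?n" using mult_le_mono2[OF s3, of k] assms(1) by (simp add: mult.commute)
    ultimately show ?thesis by (rule aux1)
  qed
  have kn: "k < ?n - 1" using h assms(3) by (rule aux2)
  have fc: "full_flag_code C" and dC: "flag_code_distance C = 2 * ((\<Sum>i = 1 .. ?n div 2. i)
                               + (\<Sum>i = ?n div 2 + 1 .. ?n - 1. ?n - i))"
    using assms(6) unfolding optimum_distance_full_flag_code_def by auto
  have finC: "finite C" and ffC: "\<And>F. F \<in> C \<Longrightarrow> full_flag F" and cC: "card C \<ge> 2"
    using fc unfolding full_flag_code_def by auto
  define g where "g = (\<lambda>i. 2 * min (Suc i) (?n - Suc i))"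
  have dC': "flag_code_distance C = (\<Sum>i < ?n - 1. g i)" unfolding dC g_def by (rule sum_identity)
  have triv: "F ! k \<inter> F' ! k = {0}" if F: "F \<in> C" and F': "F' \<in> C" and ne: "F \<noteq> F'" for F F'
  proof -
    let ?S = "{flag_distance F F' | F F'. F \<in> C \<and> F' \<in> C \<and> F \<noteq> F'}"
    have "?S \<subseteq> (\<lambda>(F, F'). flag_distance F F') ` (C \<times> C)" by auto
    then have "finite ?S" using finC by (meson finite_SigmaI finite_imageI finite_subset)
    moreover have "flag_distance F F' \<in> ?S" using F F' ne by auto
    ultimately have "flag_code_distance C \<le> flag_distance F F'"
      unfolding flag_code_distance_def by (rule Min_le)
    then have sumge: "(\<Sum>i < ?n - 1. g i) \<le> (\<Sum>i < ?n - 1. subspace_distance (F ! i) (F' ! i))"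
      unfolding dC' flag_distance_def .
    have ff: "full_flag F" "full_flag F'" using F F' ffC by auto
    have le: "subspace_distance (F ! i) (F' ! i) \<le> g i" if "i \<in> {..< ?n - 1}" for i
      using sd_facts(1)[of "F ! i" "F' ! i" "i + 1"] ff that unfolding full_flag_def g_def by auto
    have eq: "subspace_distance (F ! k) (F' ! k) = g k"
    proof (rule ccontr)
      assume "subspace_distance (F ! k) (F' ! k) \<noteq> g k"
      then have "subspace_distance (F ! k) (F' ! k) < g k" using le kn by fastforce
      then have "(\<Sum>i < ?n - 1. subspace_distance (F ! i) (F' ! i)) < (\<Sum>i < ?n - 1. g i)"
        using kn le by (intro sum_strict_mono_ex1) auto
      then show False using sumge by linarith
    qed
    have "g k = 2 * (k + 1)" unfolding g_def using h by (simp add: min_def)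
    then have e2: "subspace_distance (F ! k) (F' ! k) = 2 * (k + 1)" using eq by simp
    have "vec.subspace (F ! k)" "vec.subspace (F' ! k)" "vec.dim (F ! k) = k + 1" "vec.dim (F' ! k) = k + 1"
      using ff kn unfolding full_flag_def by auto
    from sd_facts(2)[OF this e2] show ?thesis .
  qed
  have dimk: "vec.subspace (F ! k) \<and> vec.dim (F ! k) = k + 1" if "F \<in> C" for F
    using ffC[OF that] kn unfolding full_flag_def by auto
  have disj: "(F ! k - {0}) \<inter> (F' ! k - {0}) = {}" if "F \<in> C" "F' \<in> C" "F \<noteq> F'" for F F'
    using triv[OF that] by blast
  have inj: "inj_on (\<lambda>F. F ! k - {0}) C"
  proof (rule inj_onI, rule ccontr)
    fix F F' assume F: "F \<in> C" and F': "F' \<in> C" and e: "F ! k - {0} = F' ! k - {0}" and ne: "F \<noteq> F'"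
    have "F ! k - {0} = {}" using disj[OF F F' ne] e by blast
    then have "F ! k \<subseteq> {0}" by blast
    then have "vec.dim (F ! k) = 0" by simp
    then show False using dimk[OF F] by simp
  qed
  have cardk: "card (F ! k - {0}) \<ge> ?q ^ (k + 1) - 1" if "F \<in> C" for F
  proof -
    have "0 \<in> F ! k" using dimk[OF that] vec.subspace_0 by blast
    then have "card (F ! k - {0}) = card (F ! k) - 1" by (simp add: card_Diff_singleton)
    then show ?thesis using card_subspace_ge[of "F ! k"] dimk[OF that] by simp
  qed
  have "card (\<Union>F\<in>C. F ! k - {0}) = (\<Sum>F\<in>C. card (F ! k - {0}))"
    using finC disj by (intro card_UN_disjoint) auto
  moreover have "(\<Sum>F\<in>C. card (F ! k - {0})) \<ge> (\<Sum>F\<in>C. ?q ^ (k + 1) - 1)"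
    using cardk by (intro sum_mono) auto
  moreover have "card (\<Union>F\<in>C. F ! k - {0}) \<le> card (UNIV - {0 :: 'a ^ 'n})"
    by (intro card_mono) auto
  moreover have "card (UNIV - {0 :: 'a ^ 'n}) = ?q ^ ?n - 1"
    by (simp add: card_Diff_singleton)
  ultimately have A: "card C * (?q ^ (k + 1) - 1) \<le> ?q ^ ?n - 1" by (simp add: mult.commute)
  have "card (projected_code C k) \<le> card C"
    unfolding projected_code_def using finC by (rule card_image_le)
  moreover have "card (projected_code C k) = (?q ^ ?n - 1) div (?q ^ k - 1)"
    using assms(7) unfolding is_spread_def by simp
  ultimately have B: "card C \<ge> (?q ^ ?n - 1) div (?q ^ k - 1)" by simp
  have q2: "?q \<ge> 2"
  proof -
    have "(0::'a) \<noteq> 1" by simp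
    then have "card {0::'a, 1} = 2" by simp
    moreover have "card {0::'a, 1} \<le> ?q" by (rule card_mono) auto
    ultimately show ?thesis by simp
  qed
  show False using arith_contra[OF q2 _ aux3[OF kn] B A] assms(3) by simp
qed

end
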